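(* Let $R>0$ and $\Theta=(\alpha,\rho_r,\rho_d,\rho_s,\rho_0,T)$ with $\alpha>1$, $\rho_r,\rho_d,\rho_s,\rho_0>0$, $T>1$. There exists a unique $x'(R,\Theta)\ge0$ such that $$g(x'(R,\Theta))=\Big(1+\frac{\rho_d}{\rho_r}\Big)\sqrt{\frac{R\rho_r}{\alpha}}.$$ Moreover, if $K_{max}(\Theta):=\min\big(\frac T4,\frac{\rho_r}{3\rho_0},\frac{3\rho_d}{2\rho_0}\big)>10$, then the maximizer of $\zeta_{csi}(M,K,R,\Theta)$ over real $(M,K)$ with $1\le K\le K_{max}(\Theta)$ and $M>K$ is $$K'_{csi}(R,\Theta)=\max\Big(\min\Big(\frac{R}{x'(R,\Theta)},K_{max}(\Theta)\Big),1\Big),\qquad M'_{csi}(R,\Theta)=K'_{csi}+\sqrt{K'_{csi}}\sqrt{\frac{\alpha\,(2^{R/K'_{csi}}-1)}{\rho_r}}.$$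
   Context: $g(x)=\sqrt{\frac{x}{2^x-1}}\big(2^x x\ln2-2^x+1\big)$ for $x>0$, with $g(0)=0$ (its limit). For real $M>K\ge1$, $$\frac{1}{\zeta_{csi}(M,K,R,\Theta)}=\frac1R\Big[\frac{\alpha K}{M-K}\big(2^{R/K}-1\big)+M\rho_r+K\rho_d+\rho_s\Big].$$ *)

theory Defs
  imports Complex_Main
begin

definition g :: "real \<Rightarrow> real" where
  "g x = (if x = 0 then 0
          else sqrt (x / (2 powr x - 1)) * (2 powr x * x * ln 2 - 2 powr x + 1))"

definition zeta_csi :: "real \<Rightarrow> real \<Rightarrow> real \<Rightarrow> real \<Rightarrow> real \<Rightarrow> real \<Rightarrow> real \<Rightarrow> real" where
  "zeta_csi M K R \<alpha> \<rho>r \<rho>d \<rho>s =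
     1 / ((1 / R) * (\<alpha> * K / (M - K) * (2 powr (R / K) - 1) + M * \<rho>r + K * \<rho>d + \<rho>s))"

definition x_prime :: "real \<Rightarrow> real \<Rightarrow> real \<Rightarrow> real \<Rightarrow> real" where
  "x_prime R \<alpha> \<rho>r \<rho>d = (THE x. x \<ge> 0 \<and> g x = (1 + \<rho>d / \<rho>r) * sqrt (R * \<rho>r / \<alpha>))"

definition K_max :: "real \<Rightarrow> real \<Rightarrow> real \<Rightarrow> real \<Rightarrow> real" where
  "K_max T \<rho>r \<rho>d \<rho>0 = min (T / 4) (min (\<rho>r / (3 * \<rho>0)) (3 * \<rho>d / (2 * \<rho>0)))"

definition K_csi :: "real \<Rightarrow> real \<Rightarrow> real \<Rightarrow> real \<Rightarrow> real \<Rightarrow> real \<Rightarrow> real" where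
  "K_csi R \<alpha> \<rho>r \<rho>d \<rho>0 T =
     max (min (R / x_prime R \<alpha> \<rho>r \<rho>d) (K_max T \<rho>r \<rho>d \<rho>0)) 1"

definition M_csi :: "real \<Rightarrow> real \<Rightarrow> real \<Rightarrow> real \<Rightarrow> real \<Rightarrow> real \<Rightarrow> real" where
  "M_csi R \<alpha> \<rho>r \<rho>d \<rho>0 T =
     (let K = K_csi R \<alpha> \<rho>r \<rho>d \<rho>0 T in
      K + sqrt K * sqrt (\<alpha> * (2 powr (R / K) - 1) / \<rho>r))"

end

theory Submission
  imports Defs
begin

definition Ga :: "real \<Rightarrow> real" where "Ga t = t * exp t - exp t + 1"
definition GG :: "real \<Rightarrow> real" where "GG t = sqrt (t / (exp t - 1)) * Ga t"

lemma Ga_pos: "t > 0 \<Longrightarrow> Ga t > 0"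
proof -
  assume t: "t > 0"
  have "1 - t < exp (-t)" using exp_minus_greater[of t] t by simp
  hence "(1 - t) * exp t < exp (-t) * exp t" by simp
  also have "\<dots> = 1" by (simp add: exp_minus field_simps)
  finally show ?thesis unfolding Ga_def by (simp add: algebra_simps)
qed

lemma Ga_le: "Ga t \<le> t * (exp t - 1)"
  using exp_ge_add_one_self[of t] unfolding Ga_def by (simp add: algebra_simps)

lemma P_deriv: "t > 0 \<Longrightarrow> ((\<lambda>t. t * (t * exp t - exp t + 1)^2 / (exp t - 1)) has_real_derivative
   (((t * exp t - exp t + 1)^2 + 2*t*(t * exp t - exp t + 1)*(t*exp t))*(exp t - 1) - t*(t * exp t - exp t + 1)^2*exp t)/(exp t - 1)^2) (at t)"
  apply (rule derivative_eq_intros refl | simp)+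
  by (simp add: power2_eq_square algebra_simps)

lemma P_deriv_pos:
  fixes t :: real
  assumes t: "t > 0"
  shows "(((t * exp t - exp t + 1)^2 + 2*t*(t * exp t - exp t + 1)*(t*exp t))*(exp t - 1) - t*(t * exp t - exp t + 1)^2*exp t)/(exp t - 1)^2 > 0"
proof -
  define a where "a = t * exp t - exp t + 1"
  have a0: "a > 0" using Ga_pos[OF t] by (simp add: a_def Ga_def)
  have a1: "a \<le> t * (exp t - 1)" using Ga_le[of t] by (simp add: a_def Ga_def)
  have e1: "exp t - 1 > 0" using exp_gt_one[OF t] by simp
  have "a^2 \<le> (t * (exp t - 1))^2" using a0 a1 by (intro power_mono) auto
  also have "\<dots> < 2 * t^2 * exp t * (exp t - 1)"
  proof -
    have "(t * (exp t - 1))^2 = t^2 * (exp t - 1) * (exp t - 1)" by (simp add: power2_eq_square)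
    also have "\<dots> < t^2 * (exp t - 1) * (2 * exp t)"
    proof -
      have "exp t - 1 < 2 * exp t" using exp_gt_zero[of t] by linarith
      then show ?thesis by (rule mult_strict_left_mono) (use t e1 in simp)
    qed
    finally show ?thesis by (simp add: algebra_simps)
  qed
  finally have k: "0 < 2 * t^2 * exp t * (exp t - 1) - a^2" by simp
  have eq: "((a^2 + 2*t*a*(t*exp t))*(exp t - 1) - t*a^2*exp t) = a * (2 * t^2 * exp t * (exp t - 1) - a^2)"
    unfolding a_def by (simp add: power2_eq_square algebra_simps)
  show ?thesis unfolding a_def[symmetric] eq using a0 k e1 by simp
qed

lemma GG_sq: "t > 0 \<Longrightarrow> (GG t)^2 = t * (t * exp t - exp t + 1)^2 / (exp t - 1)"
proof -
  assume t: "t > 0"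
  have e1: "exp t - 1 > 0" using exp_gt_one[OF t] by simp
  have "(GG t)^2 = (sqrt (t / (exp t - 1)))^2 * (Ga t)^2" unfolding GG_def by (simp add: power_mult_distrib)
  also have "\<dots> = t / (exp t - 1) * (Ga t)^2" using t e1 by simp
  finally show ?thesis by (simp add: Ga_def)
qed

lemma GG_pos: "t > 0 \<Longrightarrow> GG t > 0"
proof -
  assume t: "t > 0"
  have e1: "exp t - 1 > 0" using exp_gt_one[OF t] by simp
  show ?thesis unfolding GG_def using Ga_pos[OF t] t e1 by simp
qed

lemma GG_mono:
  fixes s t :: real
  assumes "0 < s" "s < t" shows "GG s < GG t"
proof -
  let ?P = "\<lambda>t. t * (t * exp t - exp t + 1)^2 / (exp t - 1)"
  have "?P s < ?P t"
  proof (rule DERIV_pos_imp_increasing[OF assms(2)])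
    fix x assume "s \<le> x" "x \<le> t"
    hence x: "x > 0" using assms by simp
    show "\<exists>y. DERIV ?P x :> y \<and> y > 0"
      using P_deriv[OF x] P_deriv_pos[OF x] by blast
  qed
  hence "(GG s)^2 < (GG t)^2" using GG_sq assms by simp
  moreover have "GG t \<ge> 0" using GG_pos[of t] assms by simp
  ultimately show ?thesis using power_less_imp_less_base by blast
qed

lemma GG_cont: "0 < a \<Longrightarrow> continuous_on {a..b} GG"
proof -
  assume a: "0 < a"
  have "\<forall>x\<in>{a..b}. exp x - 1 \<noteq> 0" using a exp_gt_one by force
  thus ?thesis unfolding GG_def Ga_def by (intro continuous_intros) auto
qed

lemma GG_small: fixes t :: real assumes "0 < t" "t \<le> 1" shows "GG t \<le> 3 * t^2"
proof -
  have e1: "exp t - 1 > 0" using exp_gt_one[OF assms(1)] by simp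
  have "t \<le> exp t - 1" using exp_ge_add_one_self[of t] by linarith
  hence "t / (exp t - 1) \<le> 1" using e1 by simp
  hence s1: "sqrt (t / (exp t - 1)) \<le> 1" by simp
  have "exp t - 1 \<le> t * exp t" using Ga_pos[OF assms(1)] by (simp add: Ga_def)
  moreover have "exp t \<le> exp 1" using assms by simp
  hence "exp t \<le> 3" using exp_le by linarith
  hence "t * exp t \<le> t * 3" using assms by (intro mult_left_mono) auto
  with \<open>exp t - 1 \<le> t * exp t\<close> have "exp t - 1 \<le> 3 * t" by linarith
  hence "t * (exp t - 1) \<le> t * (3 * t)" using assms by (intro mult_left_mono) auto
  hence "Ga t \<le> 3 * t^2" using Ga_le[of t] by (simp add: power2_eq_square)
  hence "sqrt (t / (exp t - 1)) * Ga t \<le> 1 * (3 * t^2)"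
    using s1 Ga_pos[OF assms(1)] by (intro mult_mono) auto
  thus ?thesis unfolding GG_def by simp
qed

lemma GG_large: fixes t :: real assumes "2 \<le> t" shows "t / 2 \<le> GG t"
proof -
  have t: "t > 0" using assms by simp
  have e1: "exp t - 1 > 0" using exp_gt_one[OF t] by simp
  have ea: "exp t \<ge> 1" using t by simp
  have "1 * exp t \<le> (t/2) * exp t" using assms by (intro mult_right_mono) auto
  hence ga: "t * exp t / 2 \<le> t * exp t - exp t + 1" by linarith
  have "(t/2)^2 \<le> t * (t * exp t / 2)^2 / exp t"
  proof -
    have "t * (t * exp t / 2)^2 / exp t = t^3 * exp t / 4" by (simp add: power2_eq_square power3_eq_cube)
    moreover have "t^2 \<le> t^3 * exp t"
    proof -
      have "t^2 \<le> t^3" using assms by (simp add: power2_eq_square power3_eq_cube)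
      also have "\<dots> \<le> t^3 * exp t" using ea t by simp
      finally show ?thesis .
    qed
    moreover have "(t/2)^2 = t^2/4" by (simp add: power_divide)
    ultimately show ?thesis by linarith
  qed
  also have "\<dots> \<le> t * (t * exp t - exp t + 1)^2 / exp t"
    using ga t by (intro divide_right_mono mult_left_mono power_mono) auto
  also have "\<dots> \<le> t * (t * exp t - exp t + 1)^2 / (exp t - 1)"
    using e1 t by (intro divide_left_mono) auto
  also have "\<dots> = (GG t)^2" using GG_sq[OF t] by simp
  finally show ?thesis using GG_pos[OF t] by (meson less_le power2_le_imp_le)
qed


lemma g_GG: assumes x: "x > 0" shows "g x = GG (x * ln 2) / sqrt (ln 2)"
proof -
  define L where "L = (ln 2 :: real)"
  have L: "L > 0" unfolding L_def by simp
  have p: "2 powr x = exp (x * L)" unfolding L_def powr_def by simp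
  have e1: "exp (x * L) - 1 > 0" using exp_gt_one[of "x*L"] x L by simp
  have s: "sqrt (x * L / (exp (x * L) - 1)) = sqrt (x / (exp (x * L) - 1)) * sqrt L"
    by (simp add: real_sqrt_mult[symmetric])
  show ?thesis unfolding L_def[symmetric] g_def GG_def Ga_def p s using x L
    by (simp add: field_simps)
qed

lemma psi_deriv0:
  fixes c K :: real
  assumes c: "c > 0" and K: "K > 0"
  shows "((\<lambda>K. sqrt (K * (exp (c / K) - 1))) has_real_derivative
      ((exp (c/K) - 1) - (c/K) * exp (c/K)) / (2 * sqrt (K * (exp (c / K) - 1)))) (at K)"
proof -
  have e1: "exp (c/K) - 1 > 0" using exp_gt_one[of "c/K"] c K by simp
  have d1: "((\<lambda>K. K * (exp (c / K) - 1)) has_real_derivative ((exp (c/K) - 1) - (c/K) * exp (c/K))) (at K)"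
    using K by (auto intro!: derivative_eq_intros simp: field_simps power2_eq_square)
  have "0 < K * (exp (c / K) - 1)" using K e1 by simp
  note ch = DERIV_chain2[OF DERIV_real_sqrt[OF this] d1]
  have e: "inverse (sqrt (K * (exp (c / K) - 1))) / 2 * ((exp (c/K) - 1) - (c/K) * exp (c/K))
     = ((exp (c/K) - 1) - (c/K) * exp (c/K)) / (2 * sqrt (K * (exp (c / K) - 1)))"
    by (simp add: field_simps)
  show ?thesis using ch unfolding e .
qed


lemma psi_deriv:
  fixes c K :: real
  assumes c: "c > 0" and K: "K > 0"
  shows "((\<lambda>K. sqrt (K * (exp (c / K) - 1))) has_real_derivative (- GG (c/K) / (2 * sqrt c))) (at K)"
proof -
  define t where "t = c / K"
  have t: "t > 0" using c K by (simp add: t_def)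
  have e1: "exp t - 1 > 0" using exp_gt_one[OF t] by simp
  have ct: "c = t * K" using K by (simp add: t_def)
  have prod: "t / (exp t - 1) * (K * (exp t - 1)) = c" using e1 ct by simp
  have sq: "sqrt (t / (exp t - 1)) * sqrt (K * (exp t - 1)) = sqrt c"
    by (simp only: real_sqrt_mult[symmetric] prod)
  have pK: "sqrt (K * (exp t - 1)) > 0" using K e1 by simp
  have ps: "sqrt (t / (exp t - 1)) > 0" using t e1 by simp
  have eq: "((exp t - 1) - t * exp t) / (2 * sqrt (K * (exp t - 1))) = - GG t / (2 * sqrt c)"
  proof -
    have "- GG t / (2 * sqrt c) = - (sqrt (t / (exp t - 1)) * Ga t) / (2 * (sqrt (t / (exp t - 1)) * sqrt (K * (exp t - 1))))"
      unfolding GG_def sq ..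
    also have "\<dots> = - Ga t / (2 * sqrt (K * (exp t - 1)))"
      using ps by (simp add: mult.assoc[symmetric] mult.commute[of 2])
    finally show ?thesis by (simp add: Ga_def)
  qed
  note d = psi_deriv0[OF c K, unfolded t_def[symmetric]]
  show ?thesis unfolding t_def[symmetric] using d unfolding eq .
qed

definition hf :: "real \<Rightarrow> real \<Rightarrow> real \<Rightarrow> real \<Rightarrow> real" where
  "hf A B c K = 2 * A * sqrt (K * (exp (c / K) - 1)) + K * B"

lemma hf_deriv:
  assumes c: "c > 0" and K: "K > 0"
  shows "(hf A B c has_real_derivative (B - A * GG (c/K) / sqrt c)) (at K)"
proof -
  have "((\<lambda>K. 2 * A * sqrt (K * (exp (c / K) - 1)) + K * B) has_real_derivative
     (2 * A * (- GG (c/K) / (2 * sqrt c)) + 1 * B)) (at K)"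
    by (intro DERIV_add DERIV_cmult psi_deriv[OF c K] DERIV_cmult_right DERIV_ident)
  moreover have "2 * A * (- GG (c/K) / (2 * sqrt c)) + 1 * B = B - A * GG (c/K) / sqrt c" by simp
  ultimately show ?thesis unfolding hf_def[abs_def] by simp
qed

lemma hf_cont:
  assumes c: "c > 0" and u: "u > 0"
  shows "continuous_on {u..v} (hf A B c)"
proof (rule continuous_at_imp_continuous_on, intro ballI)
  fix x assume "x \<in> {u..v}"
  hence "x > 0" using u by simp
  from hf_deriv[OF c this] show "isCont (hf A B c) x" by (rule DERIV_isCont)
qed

lemma hf_dec:
  assumes c: "c > 0" and A: "A > 0" and t0: "t0 > 0" and B: "B = A / sqrt c * GG t0"
    and u: "0 < u" and uv: "u < v" and v: "v \<le> c / t0"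
  shows "hf A B c v < hf A B c u"
proof (rule DERIV_neg_imp_decreasing_open[OF uv _ hf_cont[OF c u]])
  fix x assume x: "u < x" "x < v"
  hence x0: "x > 0" using u by simp
  have "x < c / t0" using x v by simp
  hence "t0 < c / x" using x0 t0 c by (simp add: field_simps)
  hence "GG t0 < GG (c/x)" using GG_mono t0 by blast
  moreover have "A / sqrt c > 0" using A c by simp
  ultimately have "A / sqrt c * GG t0 < A / sqrt c * GG (c/x)" by (intro mult_strict_left_mono)
  moreover have "A * GG (c/x) / sqrt c = A / sqrt c * GG (c/x)" by simp
  ultimately have "B - A * GG (c/x) / sqrt c < 0" using B by linarith
  thus "\<exists>y. DERIV (hf A B c) x :> y \<and> y < 0" using hf_deriv[OF c x0] by blast
qed

lemma hf_inc:
  assumes c: "c > 0" and A: "A > 0" and t0: "t0 > 0" and B: "B = A / sqrt c * GG t0"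
    and u: "c / t0 \<le> u" and uv: "u < v"
  shows "hf A B c u < hf A B c v"
proof -
  have "c / t0 > 0" using c t0 by simp
  hence u0: "u > 0" using u by linarith
  show ?thesis
  proof (rule DERIV_pos_imp_increasing_open[OF uv _ hf_cont[OF c u0]])
    fix x assume x: "u < x" "x < v"
    hence x0: "x > 0" using u0 by simp
    have "c / t0 < x" using x u by simp
    hence "c / x < t0" using x0 t0 c by (simp add: field_simps)
    moreover have "c / x > 0" using c x0 by simp
    ultimately have "GG (c/x) < GG t0" using GG_mono by blast
    moreover have "A / sqrt c > 0" using A c by simp
    ultimately have "A / sqrt c * GG (c/x) < A / sqrt c * GG t0" by (intro mult_strict_left_mono)
    moreover have "A * GG (c/x) / sqrt c = A / sqrt c * GG (c/x)" by simp
    ultimately have "B - A * GG (c/x) / sqrt c > 0" using B by linarith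
    thus "\<exists>y. DERIV (hf A B c) x :> y \<and> y > 0" using hf_deriv[OF c x0] by blast
  qed
qed

lemma amgm:
  fixes A B D :: real
  assumes A: "A > 0" and B: "B > 0" and D: "D > 0"
  shows "A / D + B * D = 2 * sqrt (A * B) + (sqrt A - sqrt B * D)^2 / D"
proof -
  have "(sqrt A - sqrt B * D)^2 = A - 2 * sqrt (A * B) * D + B * D^2"
    using A B by (simp add: power2_eq_square algebra_simps real_sqrt_mult)
  thus ?thesis using D by (simp add: field_simps power2_eq_square)
qed


lemma main1:
  fixes R \<alpha> \<rho>r \<rho>d :: real
  assumes "R > 0" "\<alpha> > 1" "\<rho>r > 0" "\<rho>d > 0"
  defines "y \<equiv> (1 + \<rho>d / \<rho>r) * sqrt (R * \<rho>r / \<alpha>)"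
  obtains t0 where "t0 > 0" "GG t0 = y * sqrt (ln 2)"
    "\<And>x. x \<ge> 0 \<Longrightarrow> g x = y \<longleftrightarrow> x = t0 / ln 2"
proof -
  define L where "L = ln (2::real)"
  have L: "L > 0" unfolding L_def by simp
  have h1: "\<rho>d / \<rho>r > 0" "R * \<rho>r / \<alpha> > 0" using assms by simp_all
  have y: "y > 0" unfolding y_def using h1 by (intro mult_pos_pos) auto
  define Y where "Y = y * sqrt L"
  have Y: "Y > 0" unfolding Y_def using y L by simp
  define a where "a = min 1 (Y/3)"
  define b where "b = max 2 (2*Y)"
  have a0: "a > 0" "a \<le> 1" unfolding a_def using Y by auto
  have "GG a \<le> 3 * a^2" using GG_small a0 by blast
  also have "\<dots> \<le> 3 * a" using a0 by (simp add: power2_eq_square)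
  also have "\<dots> \<le> Y" unfolding a_def by simp
  finally have ga: "GG a \<le> Y" .
  have "Y \<le> b / 2" unfolding b_def by simp
  also have "\<dots> \<le> GG b" by (rule GG_large) (simp add: b_def)
  finally have gb: "Y \<le> GG b" .
  have ab: "a \<le> b" using a0 unfolding b_def by simp
  obtain t0 where t0: "a \<le> t0" "t0 \<le> b" "GG t0 = Y"
    using IVT'[of GG a Y b, OF ga gb ab GG_cont[OF a0(1)]] by blast
  have t0p: "t0 > 0" using t0 a0 by simp
  show ?thesis
  proof (rule that[OF t0p])
    show "GG t0 = y * sqrt (ln 2)" using t0(3) unfolding Y_def L_def .
    fix x :: real assume x: "x \<ge> 0"
    show "g x = y \<longleftrightarrow> x = t0 / ln 2"
    proof
      assume gx: "g x = y"
      have "x \<noteq> 0" using gx y by (auto simp: g_def)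
      hence xp: "x > 0" using x by simp
      have "GG (x * L) = Y" using gx g_GG[OF xp] L unfolding Y_def L_def by (simp add: field_simps)
      hence eq: "GG (x * L) = GG t0" using t0 by simp
      have xl: "x * L > 0" using xp L by simp
      have "x * L = t0"
      proof (rule ccontr)
        assume "x * L \<noteq> t0"
        hence "x * L < t0 \<or> t0 < x * L" by linarith
        thus False using GG_mono[OF xl, of t0] GG_mono[OF t0p, of "x*L"] eq by auto
      qed
      thus "x = t0 / ln 2" using L unfolding L_def by (simp add: field_simps)
    next
      assume "x = t0 / ln 2"
      hence xp: "x > 0" and xl: "x * ln 2 = t0" using t0p by auto
      show "g x = y" unfolding g_GG[OF xp] xl t0(3) Y_def L_def by simp
    qed
  qed
qed


theorem theorem8:
  fixes R \<alpha> \<rho>r \<rho>d \<rho>s \<rho>0 T :: real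
  assumes "R > 0" "\<alpha> > 1" "\<rho>r > 0" "\<rho>d > 0" "\<rho>s > 0" "\<rho>0 > 0" "T > 1"
  shows "(\<exists>!x. x \<ge> 0 \<and> g x = (1 + \<rho>d / \<rho>r) * sqrt (R * \<rho>r / \<alpha>))
    \<and> (K_max T \<rho>r \<rho>d \<rho>0 > 10 \<longrightarrow>
        (let K' = K_csi R \<alpha> \<rho>r \<rho>d \<rho>0 T; M' = M_csi R \<alpha> \<rho>r \<rho>d \<rho>0 T in
          1 \<le> K' \<and> K' \<le> K_max T \<rho>r \<rho>d \<rho>0 \<and> M' > K' \<and>
          (\<forall>M K. 1 \<le> K \<and> K \<le> K_max T \<rho>r \<rho>d \<rho>0 \<and> M > K \<and> (M, K) \<noteq> (M', K') \<longrightarrow>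
             zeta_csi M K R \<alpha> \<rho>r \<rho>d \<rho>s < zeta_csi M' K' R \<alpha> \<rho>r \<rho>d \<rho>s)))"
proof -
  note pos = assms
  define y where "y = (1 + \<rho>d / \<rho>r) * sqrt (R * \<rho>r / \<alpha>)"
  obtain t0 where t0: "t0 > 0" "GG t0 = y * sqrt (ln 2)"
    and gch: "\<And>x. x \<ge> 0 \<Longrightarrow> g x = y \<longleftrightarrow> x = t0 / ln 2"
    using main1[OF assms(1-4)] unfolding y_def[symmetric] by blast
  define L where "L = ln (2::real)"
  have L: "L > 0" unfolding L_def by simp
  define x0 where "x0 = t0 / L"
  have x0: "x0 > 0" unfolding x0_def using t0 L by simp
  have x0eq: "x0 = t0 / ln 2" unfolding x0_def L_def ..
  have gx0: "g x0 = y" using gch[of x0] x0 x0eq by simp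
  have un: "\<And>x. x \<ge> 0 \<Longrightarrow> g x = y \<Longrightarrow> x = x0" using gch x0eq by simp
  have ex1: "\<exists>!x. x \<ge> 0 \<and> g x = y"
    by (rule ex1I[of _ x0]) (use gx0 un x0 in auto)
  have xp: "x_prime R \<alpha> \<rho>r \<rho>d = x0"
    unfolding x_prime_def y_def[symmetric]
    by (rule the1_equality[OF ex1]) (use gx0 x0 in auto)
  show ?thesis
  proof (intro conjI impI)
    show "\<exists>!x. x \<ge> 0 \<and> g x = (1 + \<rho>d / \<rho>r) * sqrt (R * \<rho>r / \<alpha>)"
      using ex1 unfolding y_def .
  next
    assume Kbig: "K_max T \<rho>r \<rho>d \<rho>0 > 10"
    define Km where "Km = K_max T \<rho>r \<rho>d \<rho>0"
    define c where "c = R * L"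
    have c: "c > 0" unfolding c_def using pos L by simp
    define K0 where "K0 = c / t0"
    have K0: "R / x0 = K0" unfolding K0_def c_def x0_def using L t0 by (simp add: field_simps)
    define K' where "K' = max (min K0 Km) 1"
    have Kcsi: "K_csi R \<alpha> \<rho>r \<rho>d \<rho>0 T = K'"
      unfolding K_csi_def xp K0 K'_def Km_def ..
    have K'1: "1 \<le> K'" "K' \<le> Km" using Kbig unfolding K'_def Km_def by auto
    have K'p: "K' > 0" using K'1 by simp
    have pw: "\<And>K. 2 powr (R / K) = exp (c / K)" unfolding c_def L_def powr_def by simp
    have cKp: "\<And>K. K > 0 \<Longrightarrow> exp (c / K) - 1 > 0" using c exp_gt_one by simp
    define M' where "M' = K' + sqrt K' * sqrt (\<alpha> * (exp (c / K') - 1) / \<rho>r)"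
    have Mcsi: "M_csi R \<alpha> \<rho>r \<rho>d \<rho>0 T = M'"
      unfolding M_csi_def Kcsi Let_def M'_def pw ..
    define A where "A = sqrt (\<alpha> * \<rho>r)"
    have A: "A > 0" unfolding A_def using pos by simp
    define B where "B = \<rho>r + \<rho>d"
    have B: "B = A / sqrt c * GG t0"
    proof -
      have "\<alpha> * \<rho>r * (R * \<rho>r / \<alpha>) * L = \<rho>r^2 * c"
        unfolding c_def using pos by (simp add: field_simps power2_eq_square)
      hence "sqrt (\<alpha> * \<rho>r * (R * \<rho>r / \<alpha>) * L) = sqrt (\<rho>r^2) * sqrt c"
        by (simp only: real_sqrt_mult[of "\<rho>r^2" c])
      hence "A * sqrt (R * \<rho>r / \<alpha>) * sqrt L = \<rho>r * sqrt c"
        unfolding A_def real_sqrt_mult[of "\<alpha> * \<rho>r * (R * \<rho>r / \<alpha>)" L]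
          real_sqrt_mult[of "\<alpha> * \<rho>r" "R * \<rho>r / \<alpha>"] using pos by simp
      hence "A / sqrt c * (sqrt (R * \<rho>r / \<alpha>) * sqrt L) = \<rho>r"
        using c by (simp add: field_simps)
      hence "A / sqrt c * GG t0 = (1 + \<rho>d / \<rho>r) * \<rho>r"
        unfolding t0(2) y_def L_def[symmetric] by (simp add: algebra_simps)
      moreover have "(1 + \<rho>d / \<rho>r) * \<rho>r = \<rho>r + \<rho>d" using pos by (simp add: field_simps)
      ultimately show ?thesis unfolding B_def by linarith
    qed
    define F where "F M K = \<alpha> * K / (M - K) * (exp (c / K) - 1) + M * \<rho>r + K * \<rho>d + \<rho>s" for M K
    have zeta: "\<And>M K. zeta_csi M K R \<alpha> \<rho>r \<rho>d \<rho>s = R / F M K"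
      unfolding zeta_csi_def F_def pw by simp
    have Fdec: "F M K = hf A B c K + \<rho>s + (sqrt (\<alpha> * K * (exp (c / K) - 1)) - sqrt \<rho>r * (M - K))^2 / (M - K)"
      if K: "K > 0" and MK: "M > K" for M K
    proof -
      have e: "exp (c / K) - 1 > 0" using cKp K .
      have am: "\<alpha> * K * (exp (c / K) - 1) / (M - K) + \<rho>r * (M - K) =
         2 * sqrt (\<alpha> * K * (exp (c / K) - 1) * \<rho>r) + (sqrt (\<alpha> * K * (exp (c / K) - 1)) - sqrt \<rho>r * (M - K))^2 / (M - K)"
        by (rule amgm) (use pos K MK e in auto)
      have s: "sqrt (\<alpha> * K * (exp (c / K) - 1) * \<rho>r) = A * sqrt (K * (exp (c / K) - 1))"
        unfolding A_def by (simp add: real_sqrt_mult[symmetric] ac_simps)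
      show ?thesis using am unfolding F_def hf_def s B_def by (simp add: algebra_simps)
    qed
    have D'p: "M' - K' > 0" unfolding M'_def using K'p cKp[OF K'p] pos by simp
    have D'e: "sqrt \<rho>r * (M' - K') = sqrt (\<alpha> * K' * (exp (c / K') - 1))"
      unfolding M'_def using pos by (simp add: real_sqrt_mult[symmetric] ac_simps)
    have FM': "F M' K' = hf A B c K' + \<rho>s"
      using Fdec[OF K'p] D'p D'e by simp
    have hfpos: "hf A B c K' > 0" unfolding hf_def B_def using A K'p pos cKp[OF K'p]
      by (intro add_nonneg_pos) auto
    have Fge: "F M K \<ge> hf A B c K + \<rho>s" if "K > 0" "M > K" for M K
      using Fdec[OF that] that by simp
    have main: "F M' K' < F M K" if H: "1 \<le> K" "K \<le> Km" "M > K" "(M, K) \<noteq> (M', K')" for M K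
    proof (cases "K = K'")
      case True
      hence "M \<noteq> M'" using H by auto
      hence "M - K \<noteq> M' - K'" using True by simp
      hence "sqrt \<rho>r * (M - K) \<noteq> sqrt \<rho>r * (M' - K')" using pos by simp
      hence nz: "sqrt (\<alpha> * K * (exp (c / K) - 1)) - sqrt \<rho>r * (M - K) \<noteq> 0"
        using D'e True by simp
      have "(sqrt (\<alpha> * K * (exp (c / K) - 1)) - sqrt \<rho>r * (M - K))^2 / (M - K) > 0"
        using nz H by simp
      thus ?thesis using Fdec[of K M] H True FM' K'p by simp
    next
      case False
      have Kp: "K > 0" using H by simp
      have "hf A B c K' < hf A B c K"
      proof (cases "K < K'")
        case True
        hence "K' > 1" using H by simp
        hence "K' = min K0 Km" unfolding K'_def by simp
        hence "K' \<le> c / t0" unfolding K0_def by simp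
        thus ?thesis using hf_dec[OF c A t0(1) B Kp True] by simp
      next
        case False2: False
        hence lt: "K' < K" using False by simp
        have "K0 \<le> K'"
        proof (rule ccontr)
          assume "\<not> K0 \<le> K'"
          hence "K' < K0" by simp
          hence "K' \<ge> Km" unfolding K'_def by (simp add: min_def split: if_splits)
          thus False using lt H by simp
        qed
        thus ?thesis using hf_inc[OF c A t0(1) B _ lt] unfolding K0_def by simp
      qed
      thus ?thesis using Fge[OF Kp H(3)] FM' by simp
    qed
    show "let K' = K_csi R \<alpha> \<rho>r \<rho>d \<rho>0 T; M' = M_csi R \<alpha> \<rho>r \<rho>d \<rho>0 T in
          1 \<le> K' \<and> K' \<le> K_max T \<rho>r \<rho>d \<rho>0 \<and> M' > K' \<and>
          (\<forall>M K. 1 \<le> K \<and> K \<le> K_max T \<rho>r \<rho>d \<rho>0 \<and> M > K \<and> (M, K) \<noteq> (M', K') \<longrightarrow>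
             zeta_csi M K R \<alpha> \<rho>r \<rho>d \<rho>s < zeta_csi M' K' R \<alpha> \<rho>r \<rho>d \<rho>s)"
      unfolding Kcsi Mcsi Let_def Km_def[symmetric]
    proof (intro conjI allI impI)
      show "1 \<le> K'" "K' \<le> Km" using K'1 by auto
      show "K' < M'" using D'p by simp
      fix M K assume H: "1 \<le> K \<and> K \<le> Km \<and> K < M \<and> (M, K) \<noteq> (M', K')"
      have lt: "F M' K' < F M K" using main H by blast
      have p: "F M' K' > 0" using FM' hfpos pos by simp
      show "zeta_csi M K R \<alpha> \<rho>r \<rho>d \<rho>s < zeta_csi M' K' R \<alpha> \<rho>r \<rho>d \<rho>s"
        unfolding zeta using lt p pos by (intro divide_strict_left_mono) auto
    qed
  qed
qed

end
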